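(* Let $L\in\mathbb{Z}_{\ge2}$ and $N,P>0$ with $\frac NP\le\frac{L-1}{L}$. Then $C_{L-1}(P,N)\le\frac12\ln\frac{(L-1)P}{LN}$.
   Context: $\mathcal{B}^n(y,r)$ is the closed Euclidean ball of radius $r$ centered at $y$, $\mathcal{B}^n(r)=\mathcal{B}^n(0,r)$. A finite $\mathcal{C}\subseteq\mathcal{B}^n(\sqrt{nP})$ is $(P,N,L-1)$-list-decodable (a $(P,N,L-1)$-multiple packing) if $|\mathcal{C}\cap\mathcal{B}^n(y,\sqrt{nN})|\le L-1$ for every $y\in\mathbb{R}^n$. Rate $R(\mathcal{C})=\frac1n\ln|\mathcal{C}|$. $C_{L-1}(P,N)=\limsup_{n\to\infty}\sup R(\mathcal{C})$ over all $(P,N,L-1)$-list-decodable $\mathcal{C}\subseteq\mathcal{B}^n(\sqrt{nP})$. *)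

theory Defs
  imports "HOL-Analysis.Analysis" "HOL-Library.Liminf_Limsup" "HOL-Library.Extended_Real"
begin

text \<open>Points of R^n are represented as functions nat => real vanishing outside {..<n}.\<close>

definition Rn :: "nat \<Rightarrow> (nat \<Rightarrow> real) set" where
  "Rn n = {x. \<forall>i\<ge>n. x i = 0}"

definition distn :: "nat \<Rightarrow> (nat \<Rightarrow> real) \<Rightarrow> (nat \<Rightarrow> real) \<Rightarrow> real" where
  "distn n x y = sqrt (\<Sum>i<n. (x i - y i)^2)"

definition ballN :: "nat \<Rightarrow> (nat \<Rightarrow> real) \<Rightarrow> real \<Rightarrow> (nat \<Rightarrow> real) set" where
  "ballN n y r = {x \<in> Rn n. distn n x y \<le> r}"

definition list_decodable :: "nat \<Rightarrow> real \<Rightarrow> real \<Rightarrow> nat \<Rightarrow> (nat \<Rightarrow> real) set \<Rightarrow> bool" where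
  "list_decodable n P N K C \<longleftrightarrow>
     finite C \<and> C \<subseteq> ballN n (\<lambda>_. 0) (sqrt (real n * P)) \<and>
     (\<forall>y \<in> Rn n. card (C \<inter> ballN n y (sqrt (real n * N))) \<le> K)"

definition rate :: "nat \<Rightarrow> (nat \<Rightarrow> real) set \<Rightarrow> real" where
  "rate n C = ln (real (card C)) / real n"

definition capacity :: "nat \<Rightarrow> real \<Rightarrow> real \<Rightarrow> ereal" where
  "capacity K P N = limsup (\<lambda>n. SUP C \<in> {C. list_decodable n P N K C}. ereal (rate n C))"

end

theory Submission
  imports Defs "HOL-Probability.Distributions"
begin


definition ip :: "nat \<Rightarrow> (nat\<Rightarrow>real) \<Rightarrow> (nat\<Rightarrow>real) \<Rightarrow> real" where
  "ip m x y = (\<Sum>i<m. x i * y i)"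
definition d2 :: "nat \<Rightarrow> (nat\<Rightarrow>real) \<Rightarrow> (nat\<Rightarrow>real) \<Rightarrow> real" where
  "d2 m x y = (\<Sum>i<m. (x i - y i)^2)"
definition vs :: "(nat\<Rightarrow>real) set \<Rightarrow> ((nat\<Rightarrow>real) \<Rightarrow> real) \<Rightarrow> (nat\<Rightarrow>real)" where
  "vs U w = (\<lambda>i. \<Sum>c\<in>U. w c * c i)"

lemma ip_sym: "ip m x y = ip m y x"
  unfolding ip_def by (simp add: mult.commute)

lemma ip_self_nonneg: "ip m x x \<ge> 0"
  unfolding ip_def by (intro sum_nonneg) simp

lemma d2_ip: "d2 m x y = ip m x x - 2 * ip m x y + ip m y y"
  unfolding d2_def ip_def
  by (simp add: power2_eq_square algebra_simps sum.distrib sum_subtractf sum_distrib_left)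

lemma d2_sym: "d2 m x y = d2 m y x"
  unfolding d2_def by (simp add: power2_commute)

lemma ip_CS: "(ip m x y)\<^sup>2 \<le> ip m x x * ip m y y"
  unfolding ip_def using Cauchy_Schwarz_ineq_sum[of x y "{..<m}"]
  by (simp add: power2_eq_square)

lemma ip_vs_left: "finite U \<Longrightarrow> ip m (vs U w) y = (\<Sum>c\<in>U. w c * ip m c y)"
  unfolding ip_def vs_def
  by (simp add: sum_distrib_left sum_distrib_right mult.assoc) (rule sum.swap)

lemma ip_vs_vs: "finite U \<Longrightarrow> ip m (vs U w) (vs U w) = (\<Sum>c\<in>U. \<Sum>d\<in>U. w c * w d * ip m c d)"
  apply (simp add: ip_vs_left)
  apply (subst ip_sym)
  apply (simp add: ip_vs_left sum_distrib_left)
  apply (intro sum.cong refl)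
  apply (simp add: ip_sym mult_ac)
  done

lemma d2_le_4: "ip m c c = M \<Longrightarrow> ip m d d = M \<Longrightarrow> d2 m c d \<le> 4 * M"
proof -
  assume a: "ip m c c = M" "ip m d d = M"
  have "d2 m c d \<le> (\<Sum>i<m. 2 * (c i)^2 + 2 * (d i)^2)"
    unfolding d2_def
  proof (rule sum_mono)
    fix i show "(c i - d i)\<^sup>2 \<le> 2 * (c i)\<^sup>2 + 2 * (d i)\<^sup>2"
      using zero_le_square[of "c i + d i"] by (simp add: power2_eq_square algebra_simps)
  qed
  also have "\<dots> = 2 * ip m c c + 2 * ip m d d"
    unfolding ip_def by (simp add: sum.distrib sum_distrib_left power2_eq_square)
  finally show ?thesis using a by simp
qed

lemma ramsey_simple:
  assumes sym: "\<And>x y. G x y = G y x"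
  shows "finite V \<Longrightarrow> card V \<ge> 2^(a+b) \<Longrightarrow>
    (\<exists>U\<subseteq>V. card U = a \<and> (\<forall>x\<in>U. \<forall>y\<in>U. x \<noteq> y \<longrightarrow> G x y)) \<or>
    (\<exists>W\<subseteq>V. card W = b \<and> (\<forall>x\<in>W. \<forall>y\<in>W. x \<noteq> y \<longrightarrow> \<not> G x y))"
proof (induction "a+b" arbitrary: a b V rule: less_induct)
  case less
  show ?case
  proof (cases "a = 0 \<or> b = 0")
    case True
    then show ?thesis by (metis card.empty empty_subsetI empty_iff)
  next
    case False
    then have a0: "a \<ge> 1" and b0: "b \<ge> 1" by auto
    have "card V \<ge> 1" using less.prems(2) by (metis le_trans one_le_numeral one_le_power)
    then obtain v where v: "v \<in> V" by (metis card.empty ex_in_conv not_one_le_zero)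
    define Nb where "Nb = {x\<in>V - {v}. G v x}"
    define Nn where "Nn = {x\<in>V - {v}. \<not> G v x}"
    have fin: "finite Nb" "finite Nn" using less.prems(1) by (auto simp: Nb_def Nn_def)
    have un: "Nb \<union> Nn = V - {v}" and dis: "Nb \<inter> Nn = {}" by (auto simp: Nb_def Nn_def)
    have "card Nb + card Nn = card V - 1"
      using card_Un_disjoint[OF fin dis] un v less.prems(1) by simp
    define k where "k = a+b-2"
    have e3: "a+b = Suc (Suc k)" using a0 b0 by (simp add: k_def)
    have e1: "a-1+b = Suc k" and e2: "a+(b-1) = Suc k"
      using a0 b0 e3 by auto
    have ab: "2^(a+b) = 2^(a-1+b) + (2::nat)^(a+(b-1))"
      unfolding e1 e2 e3 by simp
    have "card Nb \<ge> 2^(a-1+b) \<or> card Nn \<ge> 2^(a+(b-1))"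
    proof (rule ccontr)
      assume "\<not> ?thesis"
      then have "card Nb + card Nn + 2 \<le> 2^(a+b)" using ab by linarith
      then show False using \<open>card Nb + card Nn = card V - 1\<close> less.prems(2) \<open>card V \<ge> 1\<close> by linarith
    qed
    then show ?thesis
    proof
      assume h: "card Nb \<ge> 2^(a-1+b)"
      have "a - 1 + b < a + b" using a0 by simp
      from less.hyps[OF this fin(1) h] show ?thesis
      proof
        assume "\<exists>U\<subseteq>Nb. card U = a - 1 \<and> (\<forall>x\<in>U. \<forall>y\<in>U. x \<noteq> y \<longrightarrow> G x y)"
        then obtain U where U: "U \<subseteq> Nb" "card U = a - 1" "\<forall>x\<in>U. \<forall>y\<in>U. x \<noteq> y \<longrightarrow> G x y" by blast
        have "v \<notin> U" using U(1) by (auto simp: Nb_def)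
        moreover have "finite U" using U(1) fin(1) finite_subset by blast
        ultimately have "card (insert v U) = a" using U(2) a0 by simp
        moreover have "insert v U \<subseteq> V" using U(1) v by (auto simp: Nb_def)
        moreover have "\<forall>x\<in>insert v U. \<forall>y\<in>insert v U. x \<noteq> y \<longrightarrow> G x y"
          using U(1,3) sym by (auto simp: Nb_def)
        ultimately show ?thesis by blast
      next
        assume "\<exists>W\<subseteq>Nb. card W = b \<and> (\<forall>x\<in>W. \<forall>y\<in>W. x \<noteq> y \<longrightarrow> \<not> G x y)"
        moreover have "Nb \<subseteq> V" by (auto simp: Nb_def)
        ultimately show ?thesis by blast
      qed
    next
      assume h: "card Nn \<ge> 2^(a+(b-1))"
      have "a + (b - 1) < a + b" using b0 by simp
      from less.hyps[OF this fin(2) h] show ?thesis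
      proof
        assume "\<exists>W\<subseteq>Nn. card W = b - 1 \<and> (\<forall>x\<in>W. \<forall>y\<in>W. x \<noteq> y \<longrightarrow> \<not> G x y)"
        then obtain U where U: "U \<subseteq> Nn" "card U = b - 1" "\<forall>x\<in>U. \<forall>y\<in>U. x \<noteq> y \<longrightarrow> \<not> G x y" by blast
        have "v \<notin> U" using U(1) by (auto simp: Nn_def)
        moreover have "finite U" using U(1) fin(2) finite_subset by blast
        ultimately have "card (insert v U) = b" using U(2) b0 by simp
        moreover have "insert v U \<subseteq> V" using U(1) v by (auto simp: Nn_def)
        moreover have "\<forall>x\<in>insert v U. \<forall>y\<in>insert v U. x \<noteq> y \<longrightarrow> \<not> G x y"
          using U(1,3) sym by (auto simp: Nn_def)
        ultimately show ?thesis by blast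
      next
        assume "\<exists>U\<subseteq>Nn. card U = a \<and> (\<forall>x\<in>U. \<forall>y\<in>U. x \<noteq> y \<longrightarrow> G x y)"
        moreover have "Nn \<subseteq> V" by (auto simp: Nn_def)
        ultimately show ?thesis by blast
      qed
    qed
  qed
qed


lemma sum_if_diag:
  fixes f :: "'a \<Rightarrow> real" and M \<rho> :: real
  assumes "finite T"
  shows "(\<Sum>c\<in>T. \<Sum>d\<in>T. f c * f d * (if c = d then M else \<rho>)) = \<rho> * (\<Sum>c\<in>T. f c)^2 + (M - \<rho>) * (\<Sum>c\<in>T. (f c)^2)"
proof -
  have "\<And>c. c \<in> T \<Longrightarrow> (\<Sum>d\<in>T. f c * f d * (if c = d then M else \<rho>)) = \<rho> * f c * (\<Sum>d\<in>T. f d) + (M - \<rho>) * (f c)^2"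
  proof -
    fix c assume c: "c \<in> T"
    have "(\<Sum>d\<in>T. f c * f d * (if c = d then M else \<rho>)) = (\<Sum>d\<in>T. \<rho> * f c * f d + (if c = d then (M - \<rho>) * f c * f d else 0))"
      by (intro sum.cong) (auto simp: algebra_simps)
    also have "\<dots> = (\<Sum>d\<in>T. \<rho> * f c * f d) + (\<Sum>d\<in>T. if c = d then (M - \<rho>) * f c * f d else 0)"
      by (rule sum.distrib)
    also have "\<dots> = \<rho> * f c * (\<Sum>d\<in>T. f d) + (M - \<rho>) * (f c)^2"
      using assms c by (simp add: sum_distrib_left power2_eq_square sum.delta)
    finally show "?thesis c" .
  qed
  then have "(\<Sum>c\<in>T. \<Sum>d\<in>T. f c * f d * (if c = d then M else \<rho>)) = (\<Sum>c\<in>T. \<rho> * f c * (\<Sum>d\<in>T. f d) + (M - \<rho>) * (f c)^2)"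
    by (rule sum.cong[OF refl])
  also have "\<dots> = \<rho> * (\<Sum>c\<in>T. f c)^2 + (M - \<rho>) * (\<Sum>c\<in>T. (f c)^2)"
    by (simp add: sum.distrib sum_distrib_left sum_distrib_right power2_eq_square mult_ac)
  finally show ?thesis .
qed

lemma bad_clique:
  fixes r \<epsilon> :: real
  assumes fin: "finite T" and m: "m > 0" and r: "r < 1"
    and sph: "\<forall>c\<in>T. ip m c c = real m"
    and near: "\<forall>c\<in>T. d2 m y c \<le> r * m"
    and bad: "\<forall>c\<in>T. \<forall>d\<in>T. c \<noteq> d \<longrightarrow> ip m c d \<le> (1 - r - \<epsilon>) * m"
    and ne: "T \<noteq> {}"
  shows "(real (card T) - 1) * \<epsilon> \<le> r"
proof -
  define k where "k = real (card T)"
  define s where "s = vs T (\<lambda>_. 1)"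
  define Y where "Y = ip m y y"
  define \<rho> where "\<rho> = (1 - r - \<epsilon>) * m"
  define \<gamma> where "\<gamma> = (m + Y - r * m) / 2"
  have k1: "k \<ge> 1" using ne fin by (simp add: k_def Suc_leI card_gt_0_iff)
  have "ip m s s = (\<Sum>c\<in>T. \<Sum>d\<in>T. 1 * 1 * ip m c d)"
    unfolding s_def by (rule ip_vs_vs[OF fin])
  also have "\<dots> \<le> (\<Sum>c\<in>T. \<Sum>d\<in>T. 1 * 1 * (if c = d then real m else \<rho>))"
    using sph bad by (intro sum_mono) (auto simp: \<rho>_def)
  also have "\<dots> = \<rho> * k^2 + (m - \<rho>) * k"
    by (subst sum_if_diag[OF fin]) (simp add: k_def)
  finally have ss: "ip m s s \<le> \<rho> * k^2 + (m - \<rho>) * k" .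
  have Y0: "Y \<ge> 0" unfolding Y_def by (rule ip_self_nonneg)
  have rm: "r * m < m" using r m by (simp add: mult_strict_right_mono)
  have g0: "\<gamma> \<ge> 0" using Y0 rm by (simp add: \<gamma>_def)
  have each: "ip m c y \<ge> \<gamma>" if c: "c \<in> T" for c
  proof -
    have "d2 m y c = Y - 2 * ip m y c + m" using d2_ip[of m y c] sph c by (simp add: Y_def)
    moreover have "d2 m y c \<le> r * m" using near c by blast
    ultimately show ?thesis by (simp add: \<gamma>_def ip_sym)
  qed
  have "ip m s y = (\<Sum>c\<in>T. 1 * ip m c y)" unfolding s_def by (rule ip_vs_left[OF fin])
  also have "\<dots> \<ge> (\<Sum>c\<in>T. \<gamma>)" using each by (intro sum_mono) auto
  finally have sy: "ip m s y \<ge> k * \<gamma>" by (simp add: k_def)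
  have Ypos: "Y > 0"
  proof (rule ccontr)
    assume "\<not> Y > 0" then have Y00: "Y = 0" using Y0 by simp
    obtain c where c: "c \<in> T" using ne by blast
    have "(ip m y c)^2 \<le> Y * real m" using ip_CS[of m y c] sph c by (simp add: Y_def)
    then have "ip m y c = 0" using Y00 by simp
    then have "d2 m y c = m" using d2_ip[of m y c] sph c Y00 by (simp add: Y_def)
    then show False using near c rm by force
  qed
  have "(k * \<gamma>)^2 \<le> (ip m s y)^2"
    using sy g0 k1 by (intro power_mono) auto
  also have "\<dots> \<le> ip m s s * Y" using ip_CS[of m s y] by (simp add: Y_def)
  also have "\<dots> \<le> (\<rho> * k^2 + (m - \<rho>) * k) * Y" using ss Ypos by (intro mult_right_mono) auto
  finally have A: "(k * \<gamma>)^2 \<le> (\<rho> * k^2 + (m - \<rho>) * k) * Y" .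
  have B: "4 * \<gamma>^2 \<ge> 4 * ((1 - r) * m) * Y"
  proof -
    have g2: "2 * \<gamma> = (1 - r) * m + Y" unfolding \<gamma>_def by (simp add: field_simps)
    have "4 * \<gamma>^2 = (2 * \<gamma>)^2" by (simp add: power2_eq_square)
    also have "\<dots> = ((1 - r) * m + Y)^2" using g2 by simp
    finally have "4 * \<gamma>^2 = ((1 - r) * m + Y)^2" .
    also have "\<dots> = ((1 - r) * m - Y)^2 + 4 * ((1 - r) * m) * Y" by (simp add: power2_eq_square algebra_simps)
    finally show ?thesis by simp
  qed
  have "k^2 * ((1 - r) * m) * Y \<le> k^2 * \<gamma>^2"
  proof -
    have "(1 - r) * m * Y \<le> \<gamma>^2" using B by simp
    then have "k^2 * ((1 - r) * m * Y) \<le> k^2 * \<gamma>^2" by (intro mult_left_mono) auto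
    then show ?thesis by (simp add: mult_ac)
  qed
  also have "\<dots> \<le> (\<rho> * k^2 + (m - \<rho>) * k) * Y" using A by (simp add: power_mult_distrib)
  finally have C: "k^2 * ((1 - r) * m) * Y \<le> (\<rho> * k^2 + (m - \<rho>) * k) * Y" .
  have "k * ((1 - r) * m) \<le> \<rho> * k + (m - \<rho>)"
  proof -
    have "(k * ((1 - r) * m)) * (k * Y) \<le> (\<rho> * k + (m - \<rho>)) * (k * Y)"
      using C by (simp add: power2_eq_square algebra_simps)
    then show ?thesis using k1 Ypos by (simp add: mult_le_cancel_right)
  qed
  then have "(k - 1) * \<epsilon> * m \<le> r * m" by (simp add: \<rho>_def algebra_simps)
  then have "(k - 1) * \<epsilon> \<le> r" using m by simp
  then show ?thesis by (simp add: k_def)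
qed


lemma ip_shift:
  "ip m (\<lambda>i. x i + t * (c i - d i)) (\<lambda>i. x i + t * (c i - d i))
     = ip m x x + 2 * t * (ip m x c - ip m x d) + t^2 * d2 m c d"
  unfolding ip_def d2_def
  by (simp add: power2_eq_square algebra_simps sum.distrib sum_subtractf sum_distrib_left)

lemma sum_sq_ge:
  fixes \<mu> :: "'a \<Rightarrow> real"
  assumes "finite U" "card U = L" "L \<ge> 1" "(\<Sum>c\<in>U. \<mu> c) = 1"
  shows "(\<Sum>c\<in>U. (\<mu> c)^2) \<ge> 1 / L"
proof -
  have "0 \<le> (\<Sum>c\<in>U. (\<mu> c - 1 / L)^2)" by (intro sum_nonneg) auto
  also have "\<dots> = (\<Sum>c\<in>U. (\<mu> c)^2 - (2 / L) * \<mu> c + (1/L)^2)"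
    by (intro sum.cong) (simp_all add: power2_eq_square algebra_simps)
  also have "\<dots> = (\<Sum>c\<in>U. (\<mu> c)^2) - (\<Sum>c\<in>U. (2 / L) * \<mu> c) + L * (1/L)^2"
    using assms by (simp add: sum.distrib sum_subtractf)
  also have "(\<Sum>c\<in>U. (2 / L) * \<mu> c) = 2 / L"
    by (subst sum_distrib_left[symmetric]) (simp add: assms(4))
  also have "(\<Sum>c\<in>U. (\<mu> c)^2) - 2 / L + L * (1/L)^2 = (\<Sum>c\<in>U. (\<mu> c)^2) - 1 / L"
    using assms by (simp add: power2_eq_square field_simps)
  finally show ?thesis by simp
qed

lemma center_exists:
  fixes M \<rho> :: real and K :: nat
  assumes fin: "finite U" and cU: "card U = L" and L1: "L \<ge> 1" and K: "K > 0"
    and M0: "M \<ge> 0"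
    and sph: "\<forall>c\<in>U. ip m c c = M"
    and good: "\<forall>c\<in>U. \<forall>d\<in>U. c \<noteq> d \<longrightarrow> ip m c d \<ge> \<rho>"
    and rM: "\<rho> \<le> M"
  shows "\<exists>z. \<forall>c\<in>U. d2 m c z \<le> M - \<rho> - (M - \<rho>) / L + 4 * M / K"
proof -
  define W where "W = {w \<in> U \<rightarrow>\<^sub>E {..K}. sum w U = K}"
  define Z where "Z w = vs U (\<lambda>c. real (w c) / K)" for w :: "(nat \<Rightarrow> real) \<Rightarrow> nat"
  define F where "F w = ip m (Z w) (Z w)" for w
  have Une: "U \<noteq> {}" using cU L1 by auto
  then obtain c0 where c0: "c0 \<in> U" by blast
  have finW: "finite W" unfolding W_def using fin by (intro finite_subset[OF _ finite_PiE[of U "\<lambda>_. {..K}"]]) auto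
  define w0 where "w0 = restrict (\<lambda>c. if c = c0 then K else 0) U"
  have "w0 \<in> W" unfolding W_def w0_def using c0 fin by (auto simp: sum.delta)
  then have Wne: "W \<noteq> {}" by blast
  define mn where "mn = Min (F ` W)"
  have "mn \<in> F ` W" unfolding mn_def using finW Wne by (intro Min_in) auto
  then obtain w where wW: "w \<in> W" and Fw: "F w = mn" by auto
  have minw: "F w \<le> F w'" if "w' \<in> W" for w' using that finW unfolding Fw mn_def by (intro Min_le) auto
  have wU: "w \<in> U \<rightarrow>\<^sub>E {..K}" and wsum: "sum w U = K" using wW by (auto simp: W_def)
  define z where "z = Z w"
  define \<mu> where "\<mu> c = real (w c) / K" for c
  have musum: "(\<Sum>c\<in>U. \<mu> c) = 1"
    using wsum K by (simp add: \<mu>_def sum_divide_distrib[symmetric] of_nat_sum[symmetric])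
  have mu0: "\<mu> c \<ge> 0" for c by (simp add: \<mu>_def)
  \<comment> \<open>local optimality\<close>
  have step: "ip m z c \<ge> ip m z d - 2 * M / K" if c: "c \<in> U" and d: "d \<in> U" and cd: "c \<noteq> d" and wd: "w d \<ge> 1" for c d
  proof -
    define w' where "w' = w(c := w c + 1, d := w d - 1)"
    have "w c + w d \<le> sum w U"
    proof -
      have "sum w {c, d} \<le> sum w U" using c d fin by (intro sum_mono2) auto
      then show ?thesis using cd by simp
    qed
    then have wc: "w c + 1 \<le> K" using wsum wd by simp
    have wle: "\<forall>x\<in>U. w x \<le> K" using wU by (auto simp: PiE_def Pi_def)
    have "w d \<le> K" using wle d by auto
    then have "w d - Suc 0 \<le> K" by simp
    have w'U: "w' \<in> U \<rightarrow>\<^sub>E {..K}" using wU c d wc wle cd \<open>w d - Suc 0 \<le> K\<close> unfolding w'_def by (auto simp: PiE_def extensional_def)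
    have rw': "real (w' x) = real (w x) + (if x = c then 1 else 0) - (if x = d then 1 else 0)" for x
      using cd wd by (auto simp: w'_def of_nat_diff)
    have "real (sum w' U) = real (sum w U)"
    proof -
      have "real (sum w' U) = (\<Sum>x\<in>U. real (w x) + (if x = c then 1 else 0) - (if x = d then 1 else 0))"
        by (simp add: of_nat_sum rw')
      also have "\<dots> = real (sum w U)"
        using fin c d by (simp add: sum.distrib sum_subtractf of_nat_sum sum.delta')
      finally show ?thesis .
    qed
    then have "sum w' U = K" using wsum by linarith
    with w'U have "w' \<in> W" by (simp add: W_def)
    then have le: "F w \<le> F w'" by (rule minw)
    have Zw': "Z w' = (\<lambda>i. z i + (1 / K) * (c i - d i))"
    proof
      fix i
      have "Z w' i = (\<Sum>x\<in>U. (real (w x) + (if x = c then 1 else 0) - (if x = d then 1 else 0)) / K * x i)"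
        by (simp add: Z_def vs_def rw')
      also have "\<dots> = (\<Sum>x\<in>U. real (w x) / K * x i + (if x = c then c i / K else 0) - (if x = d then d i / K else 0))"
        by (intro sum.cong) (auto simp: add_divide_distrib diff_divide_distrib algebra_simps)
      also have "\<dots> = z i + (1 / K) * (c i - d i)"
        using fin c d by (simp add: sum.distrib sum_subtractf z_def Z_def vs_def sum.delta' diff_divide_distrib)
      finally show "Z w' i = z i + (1 / K) * (c i - d i)" .
    qed
    have "F w' = ip m z z + 2 * (1/K) * (ip m z c - ip m z d) + (1/K)^2 * d2 m c d"
      unfolding F_def Zw' by (rule ip_shift)
    then have "0 \<le> 2 * (1/K) * (ip m z c - ip m z d) + (1/K)^2 * d2 m c d"
      using le by (simp add: F_def z_def)
    moreover have "d2 m c d \<le> 4 * M" using sph c d by (intro d2_le_4) auto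
    ultimately have "0 \<le> 2 * (1/K) * (ip m z c - ip m z d) + (1/K)^2 * (4 * M)"
      using K by (smt (verit) mult_left_mono zero_le_power2)
    then have "0 \<le> (2 * (1/K) * (ip m z c - ip m z d) + (1/K)^2 * (4 * M)) * (K / 2)"
      using K by simp
    also have "\<dots> = (ip m z c - ip m z d) + 2 * M / K"
      using K by (simp add: field_simps power2_eq_square)
    finally show ?thesis by simp
  qed
  have zc: "ip m z c \<ge> ip m z z - 2 * M / K" if c: "c \<in> U" for c
  proof -
    have zz: "ip m z z = (\<Sum>d\<in>U. \<mu> d * ip m z d)"
      unfolding z_def Z_def by (subst ip_vs_left[OF fin]) (simp add: \<mu>_def ip_sym Z_def vs_def)
    have "ip m z c - ip m z z = (\<Sum>d\<in>U. \<mu> d * (ip m z c - ip m z d))"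
      using musum by (simp add: zz sum_subtractf right_diff_distrib sum_distrib_right[symmetric])
    also have "\<dots> \<ge> (\<Sum>d\<in>U. \<mu> d * (- 2 * M / K))"
    proof (intro sum_mono)
      fix d assume d: "d \<in> U"
      show "\<mu> d * (- 2 * M / K) \<le> \<mu> d * (ip m z c - ip m z d)"
      proof (cases "c = d \<or> w d = 0")
        case True
        then show ?thesis using M0 K mu0[of d] by (auto simp: \<mu>_def)
      next
        case False
        then show ?thesis using step[OF c d] mu0[of d] by (intro mult_left_mono) auto
      qed
    qed
    also have "(\<Sum>d\<in>U. \<mu> d * (- 2 * M / K)) = - 2 * M / K"
      by (subst sum_distrib_right[symmetric]) (simp add: musum)
    finally show ?thesis by simp
  qed
  have zz_ge: "ip m z z \<ge> \<rho> + (M - \<rho>) / L"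
  proof -
    have "ip m z z = (\<Sum>c\<in>U. \<Sum>d\<in>U. \<mu> c * \<mu> d * ip m c d)"
      unfolding z_def Z_def \<mu>_def by (rule ip_vs_vs[OF fin])
    also have "\<dots> \<ge> (\<Sum>c\<in>U. \<Sum>d\<in>U. \<mu> c * \<mu> d * (if c = d then M else \<rho>))"
      using sph good mu0 by (intro sum_mono mult_left_mono) (auto)
    also have "(\<Sum>c\<in>U. \<Sum>d\<in>U. \<mu> c * \<mu> d * (if c = d then M else \<rho>)) = \<rho> + (M - \<rho>) * (\<Sum>c\<in>U. (\<mu> c)^2)"
      using sum_if_diag[OF fin, of \<mu> M \<rho>] musum by simp
    also have "\<dots> \<ge> \<rho> + (M - \<rho>) * (1 / L)"
      using sum_sq_ge[OF fin cU L1 musum] rM by (intro add_left_mono mult_left_mono) auto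
    finally show ?thesis by simp
  qed
  have "\<forall>c\<in>U. d2 m c z \<le> M - \<rho> - (M - \<rho>) / L + 4 * M / K"
  proof
    fix c assume c: "c \<in> U"
    have "d2 m c z = M - 2 * ip m z c + ip m z z" using d2_ip[of m c z] sph c by (simp add: ip_sym)
    also have "\<dots> \<le> M - ip m z z + 4 * M / K" using zc[OF c] by simp
    also have "\<dots> \<le> M - \<rho> - (M - \<rho>) / L + 4 * M / K" using zz_ge by simp
    finally show "d2 m c z \<le> M - \<rho> - (M - \<rho>) / L + 4 * M / K" .
  qed
  then show ?thesis by blast
qed


lemma plotkin_count:
  fixes r \<epsilon> \<theta> :: real and K L m k0 :: nat
  assumes m: "m > 0" and L1: "L \<ge> 1" and K: "K > 0" and r1: "r < 1" and r0: "r \<ge> 0" and e0: "\<epsilon> > 0"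
    and fin: "finite S"
    and sph: "\<forall>c\<in>S. ip m c c = real m"
    and cond: "(real L - 1) / L * (r + \<epsilon>) + 4 / K \<le> \<theta>"
    and k0: "(real k0 - 1) * \<epsilon> \<ge> 1"
    and list: "\<forall>z. card {c\<in>S. d2 m c z \<le> \<theta> * m} \<le> L - 1"
  shows "card {c\<in>S. d2 m y c \<le> r * m} < 2^(L + k0)"
proof (rule ccontr)
  define T where "T = {c\<in>S. d2 m y c \<le> r * m}"
  assume "\<not> card {c\<in>S. d2 m y c \<le> r * m} < 2^(L + k0)"
  then have cT: "card T \<ge> 2^(L + k0)" by (simp add: T_def)
  have finT: "finite T" using fin by (simp add: T_def)
  define G where "G c d = (ip m c d \<ge> (1 - r - \<epsilon>) * m)" for c d
  have symG: "\<And>x y. G x y = G y x" by (simp add: G_def ip_sym)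
  from ramsey_simple[of G, OF symG finT cT] show False
  proof
    assume "\<exists>U\<subseteq>T. card U = L \<and> (\<forall>x\<in>U. \<forall>y\<in>U. x \<noteq> y \<longrightarrow> G x y)"
    then obtain U where U: "U \<subseteq> T" "card U = L" "\<forall>x\<in>U. \<forall>y\<in>U. x \<noteq> y \<longrightarrow> G x y" by blast
    have finU: "finite U" using U(1) finT finite_subset by blast
    have "\<exists>z. \<forall>c\<in>U. d2 m c z \<le> m - (1 - r - \<epsilon>) * m - (m - (1 - r - \<epsilon>) * m) / L + 4 * real m / K"
    proof (rule center_exists[OF finU U(2) L1 K])
      show "0 \<le> real m" by simp
      show "\<forall>c\<in>U. ip m c c = real m" using U(1) sph by (auto simp: T_def)
      show "\<forall>c\<in>U. \<forall>d\<in>U. c \<noteq> d \<longrightarrow> (1 - r - \<epsilon>) * real m \<le> ip m c d" using U(3) by (simp add: G_def)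
      have "0 \<le> (r + \<epsilon>) * real m" using r0 e0 by simp
      then show "(1 - r - \<epsilon>) * real m \<le> real m" by (simp add: algebra_simps)
    qed
    then obtain z where z: "\<forall>c\<in>U. d2 m c z \<le> m - (1 - r - \<epsilon>) * m - (m - (1 - r - \<epsilon>) * m) / L + 4 * real m / K" by blast
    have eq: "m - (1 - r - \<epsilon>) * m - (m - (1 - r - \<epsilon>) * m) / L + 4 * real m / K = ((real L - 1) / L * (r + \<epsilon>) + 4 / K) * m"
      using L1 by (simp add: field_simps)
    have "\<forall>c\<in>U. d2 m c z \<le> \<theta> * m"
    proof
      fix c assume "c \<in> U"
      then have "d2 m c z \<le> ((real L - 1) / L * (r + \<epsilon>) + 4 / K) * m" using z eq by simp
      also have "\<dots> \<le> \<theta> * m" using cond by (intro mult_right_mono) auto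
      finally show "d2 m c z \<le> \<theta> * m" .
    qed
    then have "U \<subseteq> {c\<in>S. d2 m c z \<le> \<theta> * m}" using U(1) by (auto simp: T_def)
    then have "card U \<le> card {c\<in>S. d2 m c z \<le> \<theta> * m}" using fin by (intro card_mono) auto
    then have "L \<le> L - 1" using list[rule_format, of z] U(2) by linarith
    then show False using L1 by simp
  next
    assume "\<exists>W\<subseteq>T. card W = k0 \<and> (\<forall>x\<in>W. \<forall>y\<in>W. x \<noteq> y \<longrightarrow> \<not> G x y)"
    then obtain W where W: "W \<subseteq> T" "card W = k0" "\<forall>x\<in>W. \<forall>y\<in>W. x \<noteq> y \<longrightarrow> \<not> G x y" by blast
    have finW: "finite W" using W(1) finT finite_subset by blast
    have "real k0 - 1 > 0"
    proof (rule ccontr)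
      assume "\<not> real k0 - 1 > 0"
      then have "(real k0 - 1) * \<epsilon> \<le> 0" using e0 by (intro mult_nonpos_nonneg) auto
      then show False using k0 by simp
    qed
    then have "W \<noteq> {}" using W(2) by auto
    have "(real (card W) - 1) * \<epsilon> \<le> r"
    proof (rule bad_clique[OF finW m r1 _ _ _ \<open>W \<noteq> {}\<close>])
      show "\<forall>c\<in>W. ip m c c = real m" using W(1) sph by (auto simp: T_def)
      show "\<forall>c\<in>W. d2 m y c \<le> r * real m" using W(1) by (auto simp: T_def)
      show "\<forall>c\<in>W. \<forall>d\<in>W. c \<noteq> d \<longrightarrow> ip m c d \<le> (1 - r - \<epsilon>) * real m"
        using W(3) by (auto simp: G_def not_le intro: less_imp_le)
    qed
    then show False using W(2) k0 r1 by simp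
  qed
qed



lemma gauss1:
  fixes A B :: real assumes A: "A > 0"
  shows "(\<integral>\<^sup>+x. ennreal (exp (- A * x\<^sup>2 + B * x)) \<partial>lborel) = ennreal (sqrt (pi / A) * exp (B\<^sup>2 / (4 * A)))"
proof -
  define \<sigma> where "\<sigma> = 1 / sqrt (2 * A)"
  define \<mu> where "\<mu> = B / (2 * A)"
  have s: "\<sigma> > 0" using A by (simp add: \<sigma>_def)
  have s2: "2 * \<sigma>\<^sup>2 = 1 / A" using A by (simp add: \<sigma>_def power_divide)
  have "2 * pi * \<sigma>\<^sup>2 = pi * (2 * \<sigma>\<^sup>2)" by simp
  also have "\<dots> = pi / A" using s2 by simp
  finally have sq: "sqrt (2 * pi * \<sigma>\<^sup>2) = sqrt (pi / A)" by simp
  have pt: "exp (- A * x\<^sup>2 + B * x) = sqrt (pi / A) * exp (B\<^sup>2 / (4 * A)) * normal_density \<mu> \<sigma> x" for x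
  proof -
    have eq: "- A * x\<^sup>2 + B * x = B\<^sup>2 / (4 * A) + (-(x - \<mu>)\<^sup>2/ (2 * \<sigma>\<^sup>2))"
      using A unfolding s2 \<mu>_def by (simp add: field_simps power2_eq_square)
    have e: "exp (- A * x\<^sup>2 + B * x) = exp (B\<^sup>2 / (4 * A)) * exp (-(x - \<mu>)\<^sup>2/ (2 * \<sigma>\<^sup>2))"
      by (subst eq) (rule exp_add)
    show ?thesis
      unfolding normal_density_def sq e using A by simp
  qed
  have "(\<integral>\<^sup>+x. ennreal (exp (- A * x\<^sup>2 + B * x)) \<partial>lborel)
      = (\<integral>\<^sup>+x. ennreal (sqrt (pi / A) * exp (B\<^sup>2 / (4 * A))) * ennreal (normal_density \<mu> \<sigma> x) \<partial>lborel)"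
    by (intro nn_integral_cong, simp only: pt, rule ennreal_mult) (use A in \<open>auto simp: normal_density_nonneg\<close>)
  also have "\<dots> = ennreal (sqrt (pi / A) * exp (B\<^sup>2 / (4 * A))) * (\<integral>\<^sup>+x. ennreal (normal_density \<mu> \<sigma> x) \<partial>lborel)"
    by (rule nn_integral_cmult) simp
  also have "(\<integral>\<^sup>+x. ennreal (normal_density \<mu> \<sigma> x) \<partial>lborel) = 1"
    using s by (subst nn_integral_eq_integral) (auto simp: normal_density_nonneg)
  finally show ?thesis by simp
qed

lemma gauss1c:
  fixes A B C :: real assumes A: "A > 0"
  shows "(\<integral>\<^sup>+x. ennreal (exp (- A * x\<^sup>2 + B * x + C)) \<partial>lborel) = ennreal (sqrt (pi / A) * exp (B\<^sup>2 / (4 * A) + C))"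
proof -
  have "(\<integral>\<^sup>+x. ennreal (exp (- A * x\<^sup>2 + B * x + C)) \<partial>lborel) = (\<integral>\<^sup>+x. ennreal (exp C) * ennreal (exp (- A * x\<^sup>2 + B * x)) \<partial>lborel)"
    by (intro nn_integral_cong) (simp add: exp_add ennreal_mult[symmetric] mult.commute)
  also have "\<dots> = ennreal (exp C) * ennreal (sqrt (pi / A) * exp (B\<^sup>2 / (4 * A)))"
    by (subst nn_integral_cmult) (measurable, simp only: gauss1[OF A])
  also have "\<dots> = ennreal (sqrt (pi / A) * exp (B\<^sup>2 / (4 * A) + C))"
    by (subst ennreal_mult[symmetric]) (use A in \<open>auto simp: exp_add mult_ac\<close>)
  finally show ?thesis .
qed

interpretation PL: product_sigma_finite "\<lambda>_::nat. lborel :: real measure"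
  by unfold_locales

abbreviation PM :: "nat \<Rightarrow> (nat \<Rightarrow> real) measure" where
  "PM m \<equiv> PiM {..<m} (\<lambda>_. lborel)"

lemma gauss_prod:
  fixes A :: real and B C :: "nat \<Rightarrow> real" assumes A: "A > 0"
  shows "(\<integral>\<^sup>+y. ennreal (exp (\<Sum>i<m. - A * (y i)\<^sup>2 + B i * y i + C i)) \<partial>PM m)
       = ennreal (sqrt (pi / A) ^ m * exp (\<Sum>i<m. (B i)\<^sup>2 / (4 * A) + C i))"
proof -
  have "(\<integral>\<^sup>+y. ennreal (exp (\<Sum>i<m. - A * (y i)\<^sup>2 + B i * y i + C i)) \<partial>PM m)
      = (\<integral>\<^sup>+y. (\<Prod>i<m. (\<lambda>i x. ennreal (exp (- A * x\<^sup>2 + B i * x + C i))) i (y i)) \<partial>PM m)"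
    by (intro nn_integral_cong) (simp add: exp_sum prod_ennreal)
  also have "\<dots> = (\<Prod>i<m. integral\<^sup>N lborel (\<lambda>x. ennreal (exp (- A * x\<^sup>2 + B i * x + C i))))"
    by (rule PL.product_nn_integral_prod) auto
  also have "\<dots> = (\<Prod>i<m. ennreal (sqrt (pi / A) * exp ((B i)\<^sup>2 / (4 * A) + C i)))"
    by (intro prod.cong refl) (rule gauss1c[OF A])
  also have "\<dots> = ennreal (\<Prod>i<m. sqrt (pi / A) * exp ((B i)\<^sup>2 / (4 * A) + C i))"
    by (rule prod_ennreal) (use A in simp)
  also have "(\<Prod>i<m. sqrt (pi / A) * exp ((B i)\<^sup>2 / (4 * A) + C i)) = sqrt (pi / A) ^ m * exp (\<Sum>i<m. (B i)\<^sup>2 / (4 * A) + C i)"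
    by (simp add: prod.distrib exp_sum)
  finally show ?thesis .
qed


lemma d2_meas[measurable]: "(\<lambda>y. d2 m y c) \<in> borel_measurable (PM m)"
  unfolding d2_def by measurable

lemma gauss_quad:
  fixes A l \<beta> \<theta> :: real and c :: "nat \<Rightarrow> real"
  assumes A: "l < A" and cc: "ip m c c = real m"
  shows "(\<integral>\<^sup>+y. ennreal (exp (- A * d2 m y (\<lambda>i. \<beta> * c i) + l * (d2 m y c - \<theta> * m))) \<partial>PM m)
       = ennreal (sqrt (pi / (A - l)) ^ m * exp (m * (A * l * (1 - \<beta>)\<^sup>2 / (A - l) - l * \<theta>)))"
proof -
  define A' where "A' = A - l"
  have A'0: "A' > 0" using A by (simp add: A'_def)
  define B where "B i = (2 * A * \<beta> - 2 * l) * c i" for i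
  define C where "C i = (l - A * \<beta>\<^sup>2) * (c i)\<^sup>2 - l * \<theta>" for i
  have pt: "- A * d2 m y (\<lambda>i. \<beta> * c i) + l * (d2 m y c - \<theta> * m) = (\<Sum>i<m. - A' * (y i)\<^sup>2 + B i * y i + C i)" for y
  proof -
    have "- A * d2 m y (\<lambda>i. \<beta> * c i) + l * (d2 m y c - \<theta> * m)
        = (\<Sum>i<m. - A * (y i - \<beta> * c i)\<^sup>2 + l * (y i - c i)\<^sup>2 - l * \<theta>)"
      unfolding d2_def by (simp add: sum.distrib sum_subtractf sum_distrib_left sum_negf algebra_simps)
    also have "\<dots> = (\<Sum>i<m. - A' * (y i)\<^sup>2 + B i * y i + C i)"
      by (intro sum.cong refl) (simp add: A'_def B_def C_def power2_eq_square algebra_simps)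
    finally show ?thesis .
  qed
  have "(\<Sum>i<m. (B i)\<^sup>2 / (4 * A') + C i) = (\<Sum>i<m. (c i)\<^sup>2 * ((A * \<beta> - l)\<^sup>2 / A' + l - A * \<beta>\<^sup>2) - l * \<theta>)"
    using A'0 by (intro sum.cong refl) (simp add: B_def C_def power2_eq_square field_simps)
  also have "\<dots> = ip m c c * ((A * \<beta> - l)\<^sup>2 / A' + l - A * \<beta>\<^sup>2) - m * (l * \<theta>)"
    unfolding ip_def by (simp add: sum_subtractf sum_distrib_right power2_eq_square)
  also have "(A * \<beta> - l)\<^sup>2 / A' + l - A * \<beta>\<^sup>2 = A * l * (1 - \<beta>)\<^sup>2 / A'"
    using A'0 by (simp add: A'_def field_simps power2_eq_square)
  finally have ex: "(\<Sum>i<m. (B i)\<^sup>2 / (4 * A') + C i) = m * (A * l * (1 - \<beta>)\<^sup>2 / A' - l * \<theta>)"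
    using cc by (simp add: algebra_simps)
  show ?thesis
    unfolding pt gauss_prod[OF A'0] ex by (simp add: A'_def)
qed


lemma d2_stewart:
  "d2 m y (\<lambda>i. \<beta> * c i) = (1 - \<beta>) * d2 m y (\<lambda>i. 0) + \<beta> * d2 m y c - \<beta> * (1 - \<beta>) * ip m c c"
proof -
  have "d2 m y (\<lambda>i. \<beta> * c i) = (\<Sum>i<m. (1 - \<beta>) * (y i - 0)\<^sup>2 + \<beta> * (y i - c i)\<^sup>2 - \<beta> * (1 - \<beta>) * (c i * c i))"
    unfolding d2_def by (intro sum.cong refl) (simp add: power2_eq_square algebra_simps)
  also have "\<dots> = (1 - \<beta>) * d2 m y (\<lambda>i. 0) + \<beta> * d2 m y c - \<beta> * (1 - \<beta>) * ip m c c"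
    unfolding d2_def ip_def by (simp add: sum.distrib sum_subtractf sum_distrib_left)
  finally show ?thesis .
qed

lemma gauss_count:
  fixes s \<eta> l1 l2 :: real and M0 m :: nat
  defines "A \<equiv> 1 / (2 * s * (1 - s))"
  assumes s0: "0 < s" and s1: "s < 1" and \<eta>: "\<eta> > 0"
    and l1: "0 < l1" "l1 < A" and l2: "l2 < 0"
    and T1: "sqrt (pi / (A - l1)) ^ m * exp (m * (A * l1 * s\<^sup>2 / (A - l1) - l1 * (s * (1 + \<eta>)))) \<le> sqrt (pi / A) ^ m / 4"
    and T2: "sqrt (pi / (A - l2)) ^ m * exp (m * (A * l2 * s\<^sup>2 / (A - l2) - l2 * (s * (1 - \<eta>)))) \<le> sqrt (pi / A) ^ m / 4"
    and fin: "finite S" and sph: "\<forall>c\<in>S. ip m c c = real m"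
    and cnt: "\<forall>y. card {c\<in>S. d2 m y c \<le> s * (1 + \<eta>) * m} \<le> M0"
  shows "real (card S) * (exp (- \<eta> * m / 2) * sqrt (pi / A) ^ m / 2) \<le> M0 * sqrt (pi / (A * s)) ^ m"
proof (cases "S = {}")
  case True
  have "A * s > 0" using s0 s1 by (simp add: A_def)
  then show ?thesis using True by simp
next
  case False
  then obtain c0 where c0: "c0 \<in> S" by blast
  have A0: "A > 0" using s0 s1 by (simp add: A_def)
  have As: "A * (1 - s) * s = 1 / 2" using s0 s1 by (simp add: A_def field_simps)
  define H where "H = sqrt (pi / A) ^ m"
  define Gv where "Gv = sqrt (pi / (A * s)) ^ m"
  define g where "g y = exp (- (A * s) * d2 m y (\<lambda>i. 0))" for y
  define hc where "hc c y = exp (- A * d2 m y (\<lambda>i. (1 - s) * c i))" for c y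
  define E where "E c = {y. s * (1 - \<eta>) * m \<le> d2 m y c \<and> d2 m y c \<le> s * (1 + \<eta>) * m}" for c
  define Bc where "Bc c = {y. d2 m y c \<le> s * (1 + \<eta>) * m}" for c
  have H0: "H \<ge> 0" using A0 by (simp add: H_def)
  have Gint: "(\<integral>\<^sup>+y. ennreal (g y) \<partial>PM m) = ennreal Gv"
  proof -
    have "(\<integral>\<^sup>+y. ennreal (g y) \<partial>PM m) = (\<integral>\<^sup>+y. ennreal (exp (- (A * s) * d2 m y (\<lambda>i. 0 * c0 i) + 0 * (d2 m y c0 - (0::real) * m))) \<partial>PM m)"
      by (simp add: g_def)
    also have "\<dots> = ennreal (sqrt (pi / (A * s - 0)) ^ m * exp (m * ((A * s) * 0 * (1 - 0)\<^sup>2 / (A * s - 0) - 0 * 0)))"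
      using A0 s0 c0 sph by (intro gauss_quad) auto
    finally show ?thesis by (simp add: Gv_def)
  qed
  have meas_E[measurable]: "Measurable.pred (PM m) (\<lambda>x. x \<in> E c)" for c
    unfolding E_def by measurable
  have meas_B[measurable]: "Measurable.pred (PM m) (\<lambda>x. x \<in> Bc c)" for c
    unfolding Bc_def by measurable
  have per: "(\<integral>\<^sup>+y. ennreal (g y) * indicator (Bc c) y \<partial>PM m) \<ge> ennreal (exp (- \<eta> * m / 2) * H / 2)" if c: "c \<in> S" for c
  proof -
    have cc: "ip m c c = real m" using sph c by auto
    have Hint: "(\<integral>\<^sup>+y. ennreal (hc c y) \<partial>PM m) = ennreal H"
    proof -
      have "(\<integral>\<^sup>+y. ennreal (hc c y) \<partial>PM m) = (\<integral>\<^sup>+y. ennreal (exp (- A * d2 m y (\<lambda>i. (1 - s) * c i) + 0 * (d2 m y c - (0::real) * m))) \<partial>PM m)"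
        by (simp add: hc_def)
      also have "\<dots> = ennreal (sqrt (pi / (A - 0)) ^ m * exp (m * (A * 0 * (1 - (1 - s))\<^sup>2 / (A - 0) - 0 * 0)))"
        using A0 cc by (intro gauss_quad) auto
      finally show ?thesis by (simp add: H_def)
    qed
    define t1 where "t1 y = exp (- A * d2 m y (\<lambda>i. (1 - s) * c i) + l1 * (d2 m y c - (s * (1 + \<eta>)) * m))" for y
    define t2 where "t2 y = exp (- A * d2 m y (\<lambda>i. (1 - s) * c i) + l2 * (d2 m y c - (s * (1 - \<eta>)) * m))" for y
    have I1: "(\<integral>\<^sup>+y. ennreal (t1 y) \<partial>PM m) \<le> ennreal (H / 4)"
    proof -
      have "(\<integral>\<^sup>+y. ennreal (t1 y) \<partial>PM m) = ennreal (sqrt (pi / (A - l1)) ^ m * exp (m * (A * l1 * (1 - (1 - s))\<^sup>2 / (A - l1) - l1 * (s * (1 + \<eta>)))))"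
        unfolding t1_def using l1 cc by (intro gauss_quad) auto
      also have "\<dots> \<le> ennreal (H / 4)" using T1 unfolding H_def by (intro ennreal_leI) simp
      finally show ?thesis .
    qed
    have I2: "(\<integral>\<^sup>+y. ennreal (t2 y) \<partial>PM m) \<le> ennreal (H / 4)"
    proof -
      have "(\<integral>\<^sup>+y. ennreal (t2 y) \<partial>PM m) = ennreal (sqrt (pi / (A - l2)) ^ m * exp (m * (A * l2 * (1 - (1 - s))\<^sup>2 / (A - l2) - l2 * (s * (1 - \<eta>)))))"
        unfolding t2_def using l2 A0 cc by (intro gauss_quad) auto
      also have "\<dots> \<le> ennreal (H / 4)" using T2 unfolding H_def by (intro ennreal_leI) simp
      finally show ?thesis .
    qed
    have ptw: "ennreal (hc c y) \<le> ennreal (hc c y) * indicator (E c) y + ennreal (t1 y) + ennreal (t2 y)" for y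
    proof (cases "y \<in> E c")
      case True then show ?thesis by simp
    next
      case False
      then consider "d2 m y c > s * (1 + \<eta>) * m" | "d2 m y c < s * (1 - \<eta>) * m" unfolding E_def by force
      then show ?thesis
      proof cases
        case 1
        have "l1 * (d2 m y c - (s * (1 + \<eta>)) * m) \<ge> 0" using 1 l1 by simp
        then have "hc c y \<le> t1 y" unfolding hc_def t1_def by simp
        then have "ennreal (hc c y) \<le> ennreal (t1 y)" by (rule ennreal_leI)
        moreover have "0 + ennreal (t1 y) + 0 \<le> ennreal (hc c y) * indicator (E c) y + ennreal (t1 y) + ennreal (t2 y)"
          by (intro add_mono) auto
        ultimately show ?thesis by (metis add.left_neutral add.right_neutral order_trans)
      next
        case 2
        have "l2 * (d2 m y c - (s * (1 - \<eta>)) * m) \<ge> 0" using 2 l2 by (simp add: mult_nonpos_nonpos)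
        then have "hc c y \<le> t2 y" unfolding hc_def t2_def by simp
        then have "ennreal (hc c y) \<le> ennreal (t2 y)" by (rule ennreal_leI)
        moreover have "0 + 0 + ennreal (t2 y) \<le> ennreal (hc c y) * indicator (E c) y + ennreal (t1 y) + ennreal (t2 y)"
          by (intro add_mono) auto
        ultimately show ?thesis by (metis add.left_neutral add.right_neutral order_trans)
      qed
    qed
    have "ennreal H \<le> (\<integral>\<^sup>+y. ennreal (hc c y) * indicator (E c) y + ennreal (t1 y) + ennreal (t2 y) \<partial>PM m)"
      unfolding Hint[symmetric] by (intro nn_integral_mono ptw)
    also have "\<dots> = (\<integral>\<^sup>+y. ennreal (hc c y) * indicator (E c) y \<partial>PM m) + (\<integral>\<^sup>+y. ennreal (t1 y) \<partial>PM m) + (\<integral>\<^sup>+y. ennreal (t2 y) \<partial>PM m)"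
    proof -
      have m1: "(\<lambda>y. ennreal (hc c y)) \<in> borel_measurable (PM m)" unfolding hc_def by measurable
      have m2: "(\<lambda>y. ennreal (t1 y)) \<in> borel_measurable (PM m)" unfolding t1_def by measurable
      have m3: "(\<lambda>y. ennreal (t2 y)) \<in> borel_measurable (PM m)" unfolding t2_def by measurable
      have m4: "(\<lambda>y. ennreal (hc c y) * indicator (E c) y) \<in> borel_measurable (PM m)"
        using m1 by measurable
      have m5: "(\<lambda>y. ennreal (hc c y) * indicator (E c) y + ennreal (t1 y)) \<in> borel_measurable (PM m)"
        using m4 m2 by measurable
      show ?thesis by (simp only: nn_integral_add[OF m5 m3] nn_integral_add[OF m4 m2])
    qed
    also have "\<dots> \<le> (\<integral>\<^sup>+y. ennreal (hc c y) * indicator (E c) y \<partial>PM m) + ennreal (H / 4) + ennreal (H / 4)"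
      using I1 I2 by (intro add_mono) auto
    finally have Hle: "ennreal H \<le> (\<integral>\<^sup>+y. ennreal (hc c y) * indicator (E c) y \<partial>PM m) + ennreal (H / 2)"
      using H0 by (simp add: ennreal_plus[symmetric] add.assoc)
    have XE: "(\<integral>\<^sup>+y. ennreal (hc c y) * indicator (E c) y \<partial>PM m) \<ge> ennreal (H / 2)"
    proof -
      have eqH: "ennreal H = ennreal (H / 2) + ennreal (H / 2)" using H0 by (simp add: ennreal_plus[symmetric])
      have "ennreal (H / 2) + ennreal (H / 2) \<le> ennreal (H / 2) + (\<integral>\<^sup>+y. ennreal (hc c y) * indicator (E c) y \<partial>PM m)"
        using Hle unfolding eqH by (simp add: add.commute)
      then show ?thesis by (simp add: ennreal_add_left_cancel_le)
    qed
    have ptg: "ennreal (exp (- \<eta> * m / 2)) * (ennreal (hc c y) * indicator (E c) y) \<le> ennreal (g y) * indicator (Bc c) y" for y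
    proof (cases "y \<in> E c")
      case False then show ?thesis by simp
    next
      case True
      then have yB: "y \<in> Bc c" and lo: "s * (1 - \<eta>) * m \<le> d2 m y c" by (auto simp: E_def Bc_def)
      have id: "A * d2 m y (\<lambda>i. (1 - s) * c i) - A * s * d2 m y (\<lambda>i. 0) = A * (1 - s) * (d2 m y c - s * m)"
        unfolding d2_stewart[of m y "1 - s" c] cc by (simp add: algebra_simps)
      have "A * (1 - s) * (d2 m y c - s * m) \<ge> A * (1 - s) * (s * (1 - \<eta>) * m - s * m)"
        using lo A0 s1 by (intro mult_left_mono) auto
      also have "A * (1 - s) * (s * (1 - \<eta>) * m - s * m) = - (A * (1 - s) * s) * (\<eta> * m)"
        by (simp add: algebra_simps)
      also have "\<dots> = - \<eta> * m / 2" using As by simp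
      finally have "- \<eta> * m / 2 + (- A * d2 m y (\<lambda>i. (1 - s) * c i)) \<le> - (A * s) * d2 m y (\<lambda>i. 0)"
        using id by simp
      then have "exp (- \<eta> * m / 2) * hc c y \<le> g y"
        unfolding hc_def g_def by (simp add: exp_add[symmetric])
      moreover have "ennreal (exp (- \<eta> * m / 2)) * (ennreal (hc c y) * indicator (E c) y) = ennreal (exp (- \<eta> * m / 2) * hc c y)"
        using True by (simp, intro ennreal_mult[symmetric]) (auto simp: hc_def)
      ultimately show ?thesis using yB by (simp add: ennreal_leI)
    qed
    have "ennreal (exp (- \<eta> * m / 2) * H / 2) = ennreal (exp (- \<eta> * m / 2)) * ennreal (H / 2)"
      using H0 by (simp add: ennreal_mult[symmetric])
    also have "\<dots> \<le> ennreal (exp (- \<eta> * m / 2)) * (\<integral>\<^sup>+y. ennreal (hc c y) * indicator (E c) y \<partial>PM m)"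
      using XE by (intro mult_left_mono) auto
    also have "\<dots> = (\<integral>\<^sup>+y. ennreal (exp (- \<eta> * m / 2)) * (ennreal (hc c y) * indicator (E c) y) \<partial>PM m)"
      unfolding hc_def by (subst nn_integral_cmult) auto
    also have "\<dots> \<le> (\<integral>\<^sup>+y. ennreal (g y) * indicator (Bc c) y \<partial>PM m)"
      by (intro nn_integral_mono ptg)
    finally show ?thesis .
  qed
  have "ennreal (real (card S) * (exp (- \<eta> * m / 2) * H / 2)) = (\<Sum>c\<in>S. ennreal (exp (- \<eta> * m / 2) * H / 2))"
  proof -
    have "ennreal (real (card S) * (exp (- \<eta> * m / 2) * H / 2)) = ennreal (real (card S)) * ennreal (exp (- \<eta> * m / 2) * H / 2)"
      using H0 by (intro ennreal_mult) auto
    then show ?thesis by (simp add: ennreal_of_nat_eq_real_of_nat)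
  qed
  also have "\<dots> \<le> (\<Sum>c\<in>S. \<integral>\<^sup>+y. ennreal (g y) * indicator (Bc c) y \<partial>PM m)"
    using per by (intro sum_mono) auto
  also have "\<dots> = (\<integral>\<^sup>+y. (\<Sum>c\<in>S. ennreal (g y) * indicator (Bc c) y) \<partial>PM m)"
    unfolding g_def by (intro nn_integral_sum[symmetric]) auto
  also have "\<dots> \<le> (\<integral>\<^sup>+y. ennreal (g y) * of_nat M0 \<partial>PM m)"
  proof (intro nn_integral_mono)
    fix y
    have "(\<Sum>c\<in>S. ennreal (g y) * indicator (Bc c) y) = ennreal (g y) * (\<Sum>c\<in>S. indicator (Bc c) y)"
      by (simp add: sum_distrib_left)
    also have "(\<Sum>c\<in>S. indicator (Bc c) y :: ennreal) = of_nat (card {c\<in>S. d2 m y c \<le> s * (1 + \<eta>) * m})"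
    proof -
      have "(\<Sum>c\<in>S. indicator (Bc c) y :: ennreal) = (\<Sum>c\<in>S. if d2 m y c \<le> s * (1 + \<eta>) * m then 1 else 0)"
        by (intro sum.cong) (auto simp: Bc_def indicator_def)
      also have "\<dots> = sum (\<lambda>_. 1) {c\<in>S. d2 m y c \<le> s * (1 + \<eta>) * m}"
        using fin by (rule sum.inter_filter[symmetric])
      also have "\<dots> = of_nat (card {c\<in>S. d2 m y c \<le> s * (1 + \<eta>) * m})"
        by simp
      finally show ?thesis .
    qed
    also have "ennreal (g y) * of_nat (card {c\<in>S. d2 m y c \<le> s * (1 + \<eta>) * m}) \<le> ennreal (g y) * of_nat M0"
      using cnt by (intro mult_left_mono) auto
    finally show "(\<Sum>c\<in>S. ennreal (g y) * indicator (Bc c) y) \<le> ennreal (g y) * of_nat M0" .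
  qed
  also have "\<dots> = (\<integral>\<^sup>+y. ennreal (g y) \<partial>PM m) * of_nat M0"
    unfolding g_def by (subst nn_integral_multc) auto
  also have "\<dots> = ennreal (M0 * Gv)"
  proof -
    have Gv0: "Gv \<ge> 0" using A0 s0 by (simp add: Gv_def)
    have "ennreal Gv * ennreal (real M0) = ennreal (Gv * real M0)"
      using Gv0 by (intro ennreal_mult[symmetric]) auto
    then show ?thesis unfolding Gint by (simp add: ennreal_of_nat_eq_real_of_nat mult.commute)
  qed
  finally have "ennreal (real (card S) * (exp (- \<eta> * m / 2) * H / 2)) \<le> ennreal (M0 * Gv)" .
  then have "real (card S) * (exp (- \<eta> * m / 2) * H / 2) \<le> M0 * Gv"
    by (subst (asm) ennreal_le_iff) (use A0 s0 in \<open>auto simp: Gv_def\<close>)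
  then show ?thesis by (simp add: H_def Gv_def)
qed



lemma tail_bound:
  fixes A l s \<theta> :: real
  assumes A: "A > 0" and l: "l < A" and As: "A * s * (1 - s) = 1/2"
  shows "sqrt (pi / (A - l)) ^ m * exp (m * (A * l * s\<^sup>2 / (A - l) - l * \<theta>))
       \<le> sqrt (pi / A) ^ m * exp (m * (l * (A * s / (A - l) - \<theta>)))"
proof -
  have Al: "A - l > 0" using l by simp
  define x where "x = A / (A - l)"
  have x0: "x > 0" using A Al by (simp add: x_def)
  have "pi / (A - l) = pi / A * x" using A Al by (simp add: x_def field_simps)
  then have sq: "sqrt (pi / (A - l)) = sqrt (pi / A) * sqrt x" by (simp only: real_sqrt_mult)
  have "sqrt x = exp (ln x / 2)"
    using x0 by (simp add: powr_half_sqrt[symmetric] powr_def)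
  also have "\<dots> \<le> exp ((x - 1) / 2)" using ln_le_minus_one[OF x0] by simp
  also have "x - 1 = l / (A - l)" using Al by (simp add: x_def field_simps)
  finally have sx: "sqrt x \<le> exp (l / (A - l) / 2)" .
  have "sqrt x ^ m \<le> exp (l / (A - l) / 2) ^ m" using sx x0 by (intro power_mono) auto
  also have "\<dots> = exp (m * (l / (A - l) / 2))" by (rule exp_of_nat_mult[symmetric])
  finally have sxm: "sqrt x ^ m \<le> exp (m * (l / (A - l) / 2))" .
  have "sqrt (pi / (A - l)) ^ m * exp (m * (A * l * s\<^sup>2 / (A - l) - l * \<theta>))
      = sqrt (pi / A) ^ m * (sqrt x ^ m * exp (m * (A * l * s\<^sup>2 / (A - l) - l * \<theta>)))"
    unfolding sq by (simp add: power_mult_distrib mult_ac)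
  also have "\<dots> \<le> sqrt (pi / A) ^ m * (exp (m * (l / (A - l) / 2)) * exp (m * (A * l * s\<^sup>2 / (A - l) - l * \<theta>)))"
    using sxm A by (intro mult_left_mono mult_right_mono) auto
  also have "exp (m * (l / (A - l) / 2)) * exp (m * (A * l * s\<^sup>2 / (A - l) - l * \<theta>))
      = exp (m * (l * ((1/2 + A * s\<^sup>2) / (A - l)) - l * \<theta>))"
  proof -
    have "m * (l / (A - l) / 2) + m * (A * l * s\<^sup>2 / (A - l) - l * \<theta>) = m * (l * ((1/2 + A * s\<^sup>2) / (A - l)) - l * \<theta>)"
      by (simp add: add_divide_distrib algebra_simps)
    then show ?thesis by (simp only: exp_add[symmetric])
  qed
  also have "1/2 + A * s\<^sup>2 = A * s" using As by (simp add: power2_eq_square algebra_simps)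
  also have "exp (m * (l * (A * s / (A - l)) - l * \<theta>)) = exp (m * (l * (A * s / (A - l) - \<theta>)))"
    by (simp add: algebra_simps)
  finally show ?thesis .
qed

lemma exp_small:
  fixes \<kappa> :: real assumes k: "\<kappa> > 0" and m: "real m \<ge> ln 4 / \<kappa>"
  shows "exp (m * (- \<kappa>)) \<le> 1/4"
proof -
  have "m * \<kappa> \<ge> ln 4" using m k by (simp add: field_simps)
  then have "exp (m * (- \<kappa>)) \<le> exp (- ln 4)" by simp
  also have "\<dots> = 1/4" by (simp add: exp_minus)
  finally show ?thesis .
qed


lemma core:
  fixes L :: nat and \<theta> e :: real
  assumes L2: "L \<ge> 2" and \<theta>0: "0 < \<theta>" and \<theta>L: "\<theta> \<le> (real L - 1) / L" and e: "e > 0"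
  shows "\<exists>M0::real. \<exists>m0::nat. \<forall>m \<ge> m0. \<forall>S. finite S \<longrightarrow> (\<forall>c\<in>S. ip m c c = real m) \<longrightarrow>
     (\<forall>z. card {c\<in>S. d2 m c z \<le> \<theta> * m} \<le> L - 1) \<longrightarrow>
     real (card S) \<le> M0 * exp (m * (1/2 * ln ((real L - 1) / (L * \<theta>)) + e))"
proof -
  have L1: "real L - 1 > 0" using L2 by simp
  have L0: "real L > 0" using L2 by simp
  define ts where "ts = L * \<theta> / (real L - 1)"
  have ts0: "ts > 0" using L1 L0 \<theta>0 by (simp add: ts_def)
  have ts1: "ts \<le> 1" using \<theta>L L1 L0 by (simp add: ts_def field_simps)
  have tsinv: "1 / ts = (real L - 1) / (L * \<theta>)" by (simp add: ts_def)
  define \<eta> where "\<eta> = min (1/2) (e/2)"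
  have \<eta>0: "\<eta> > 0" and \<eta>h: "\<eta> \<le> 1/2" and \<eta>e: "\<eta> \<le> e/2" using e by (auto simp: \<eta>_def)
  define s where "s = ts / (1 + \<eta>)^2"
  have s0: "s > 0" using ts0 \<eta>0 by (simp add: s_def)
  have sq1: "(1 + \<eta>)^2 > 1" using \<eta>0 by (simp add: power2_eq_square) (smt (verit) mult_less_cancel_left1)
  have s1: "s < 1"
  proof -
    have "ts < (1 + \<eta>)^2" using ts1 sq1 by linarith
    then show ?thesis using sq1 by (simp add: s_def divide_less_eq)
  qed
  define r where "r = s * (1 + \<eta>)"
  have r_eq: "r = ts / (1 + \<eta>)" using \<eta>0 by (simp add: r_def s_def power2_eq_square)
  have r0: "r \<ge> 0" using s0 \<eta>0 by (simp add: r_def)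
  have r1: "r < 1" using ts1 \<eta>0 by (simp add: r_eq field_simps)
  define \<epsilon> where "\<epsilon> = ts * \<eta> / (2 * (1 + \<eta>))"
  have \<epsilon>0: "\<epsilon> > 0" using ts0 \<eta>0 by (simp add: \<epsilon>_def)
  define K :: nat where "K = nat \<lceil>8 * (1 + \<eta>) / (\<theta> * \<eta>)\<rceil> + 1"
  have K0: "K > 0" by (simp add: K_def)
  have Kbig: "real K > 8 * (1 + \<eta>) / (\<theta> * \<eta>)" unfolding K_def by linarith
  have K4: "4 / real K \<le> \<theta> * \<eta> / (2 * (1 + \<eta>))"
  proof -
    have pos: "8 * (1 + \<eta>) / (\<theta> * \<eta>) > 0" using \<theta>0 \<eta>0 by simp
    have "4 / real K \<le> 4 / (8 * (1 + \<eta>) / (\<theta> * \<eta>))" 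
    proof (rule divide_left_mono)
      show "8 * (1 + \<eta>) / (\<theta> * \<eta>) \<le> real K" using Kbig by simp
      show "0 < real K * (8 * (1 + \<eta>) / (\<theta> * \<eta>))" using K0 pos by (intro mult_pos_pos) auto
    qed simp
    also have "\<dots> = \<theta> * \<eta> / (2 * (1 + \<eta>))" using \<eta>0 \<theta>0 by (simp add: field_simps)
    finally show ?thesis .
  qed
  have rel: "(real L - 1) / L * (r + \<epsilon>) = \<theta> - \<theta> * \<eta> / (2 * (1 + \<eta>))"
  proof -
    have tsth: "(real L - 1) / L * ts = \<theta>" using L1 L0 by (simp add: ts_def)
    have e1: "(2 * ts) / (2 * (1 + \<eta>)) = ts / (1 + \<eta>)" by (rule mult_divide_mult_cancel_left) simp
    have "r + \<epsilon> = (2 * ts) / (2 * (1 + \<eta>)) + ts * \<eta> / (2 * (1 + \<eta>))" by (simp only: e1 r_eq \<epsilon>_def)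
    also have "\<dots> = (2 * ts + ts * \<eta>) / (2 * (1 + \<eta>))" by (rule add_divide_distrib[symmetric])
    also have "\<dots> = ts * ((2 + \<eta>) / (2 * (1 + \<eta>)))" by (simp add: algebra_simps)
    finally have "r + \<epsilon> = ts * ((2 + \<eta>) / (2 * (1 + \<eta>)))" .
    then have "(real L - 1) / L * (r + \<epsilon>) = ((real L - 1) / L * ts) * ((2 + \<eta>) / (2 * (1 + \<eta>)))" by simp
    also have "\<dots> = \<theta> * ((2 + \<eta>) / (2 * (1 + \<eta>)))" using tsth by simp
    also have "\<dots> = \<theta> - \<theta> * \<eta> / (2 * (1 + \<eta>))" using \<eta>0 by (simp add: field_simps)
    finally show ?thesis .
  qed
  have cond: "(real L - 1) / L * (r + \<epsilon>) + 4 / K \<le> \<theta>" using rel K4 by simp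
  define k0 :: nat where "k0 = nat \<lceil>1 / \<epsilon>\<rceil> + 1"
  have k0: "(real k0 - 1) * \<epsilon> \<ge> 1"
  proof -
    have "real k0 - 1 \<ge> 1 / \<epsilon>" unfolding k0_def by linarith
    then have "(real k0 - 1) * \<epsilon> \<ge> 1 / \<epsilon> * \<epsilon>" using \<epsilon>0 by (intro mult_right_mono) auto
    then show ?thesis using \<epsilon>0 by simp
  qed
  define A where "A = 1 / (2 * s * (1 - s))"
  have A0: "A > 0" using s0 s1 by (simp add: A_def)
  have As: "A * s * (1 - s) = 1/2" using s0 s1 by (simp add: A_def field_simps)
  define l1 where "l1 = A * \<eta> / (2 * (1 + \<eta>))"
  have l10: "l1 > 0" using A0 \<eta>0 by (simp add: l1_def)
  have l1A: "l1 < A"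
  proof -
    have "0 < A * \<eta> + A * 2" using A0 \<eta>0 by (simp add: add_pos_pos)
    then show ?thesis using A0 \<eta>0 by (simp add: l1_def field_simps)
  qed
  define l2 where "l2 = - (A * \<eta> / 2)"
  have l20: "l2 < 0" using A0 \<eta>0 by (simp add: l2_def)
  have l2A: "l2 < A" using l20 A0 by simp
  define \<kappa>1 where "\<kappa>1 = l1 * (s * (1 + \<eta>) - A * s / (A - l1))"
  define \<kappa>2 where "\<kappa>2 = - l2 * (A * s / (A - l2) - s * (1 - \<eta>))"
  have \<kappa>1: "\<kappa>1 > 0"
  proof -
    have "A * s / (A - l1) < s * (1 + \<eta>)"
    proof -
      have "0 < A * \<eta> + A * (\<eta> * \<eta>)" using A0 \<eta>0 by (simp add: add_pos_pos)
      then have "A < (1 + \<eta>) * (A - l1)" using A0 \<eta>0 by (simp add: l1_def field_simps)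
      then have "A * s < ((1 + \<eta>) * (A - l1)) * s" using s0 by (rule mult_strict_right_mono)
      then have "A * s < s * (1 + \<eta>) * (A - l1)" by (simp add: mult_ac)
      then show ?thesis using l1A by (simp add: field_simps)
    qed
    then show ?thesis using l10 by (simp add: \<kappa>1_def)
  qed
  have \<kappa>2: "\<kappa>2 > 0"
  proof -
    have "A * s / (A - l2) > s * (1 - \<eta>)"
    proof -
      have "0 < A * \<eta> + A * (\<eta> * \<eta>)" using A0 \<eta>0 by (simp add: add_pos_pos)
      then have "(1 - \<eta>) * (A - l2) < A" using A0 \<eta>0 by (simp add: l2_def algebra_simps power2_eq_square)
      then have "((1 - \<eta>) * (A - l2)) * s < A * s" using s0 by (rule mult_strict_right_mono)
      then have "s * (1 - \<eta>) * (A - l2) < A * s" by (simp add: mult_ac)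
      then show ?thesis using l2A by (simp add: field_simps)
    qed
    then show ?thesis using l20 by (simp add: \<kappa>2_def mult_neg_pos)
  qed
  define m0 :: nat where "m0 = max 1 (max (nat \<lceil>ln 4 / \<kappa>1\<rceil>) (nat \<lceil>ln 4 / \<kappa>2\<rceil>))"
  define Mn :: nat where "Mn = 2 ^ (L + k0)"
  define M0 :: real where "M0 = 2 * Mn"
  have main: "real (card S) \<le> M0 * exp (m * (1/2 * ln ((real L - 1) / (L * \<theta>)) + e))"
    if m: "m \<ge> m0" and fin: "finite S" and sph: "\<forall>c\<in>S. ip m c c = real m"
      and list: "\<forall>z. card {c\<in>S. d2 m c z \<le> \<theta> * m} \<le> L - 1" for m S
  proof -
    have m1: "m > 0" using m by (simp add: m0_def)
    have mk1: "real m \<ge> ln 4 / \<kappa>1" using m unfolding m0_def by linarith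
    have mk2: "real m \<ge> ln 4 / \<kappa>2" using m unfolding m0_def by linarith
    define H where "H = sqrt (pi / A) ^ m"
    have H0: "H > 0" using A0 by (simp add: H_def)
    have cnt: "\<forall>y. card {c\<in>S. d2 m y c \<le> s * (1 + \<eta>) * m} \<le> Mn"
    proof
      fix y
      have "card {c\<in>S. d2 m y c \<le> r * m} < 2 ^ (L + k0)"
        using L2 by (intro plotkin_count[OF m1 _ K0 r1 r0 \<epsilon>0 fin sph cond k0 list]) auto
      then show "card {c\<in>S. d2 m y c \<le> s * (1 + \<eta>) * m} \<le> Mn" by (simp add: Mn_def r_def)
    qed
    have T1: "sqrt (pi / (A - l1)) ^ m * exp (m * (A * l1 * s\<^sup>2 / (A - l1) - l1 * (s * (1 + \<eta>)))) \<le> sqrt (pi / A) ^ m / 4"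
    proof -
      have "sqrt (pi / (A - l1)) ^ m * exp (m * (A * l1 * s\<^sup>2 / (A - l1) - l1 * (s * (1 + \<eta>))))
          \<le> H * exp (m * (l1 * (A * s / (A - l1) - s * (1 + \<eta>))))"
        unfolding H_def by (rule tail_bound[OF A0 l1A As])
      also have "l1 * (A * s / (A - l1) - s * (1 + \<eta>)) = - \<kappa>1" by (simp add: \<kappa>1_def algebra_simps)
      also have "H * exp (m * (- \<kappa>1)) \<le> H * (1/4)" using exp_small[OF \<kappa>1 mk1] H0 by (intro mult_left_mono) auto
      finally show ?thesis by (simp add: H_def)
    qed
    have T2: "sqrt (pi / (A - l2)) ^ m * exp (m * (A * l2 * s\<^sup>2 / (A - l2) - l2 * (s * (1 - \<eta>)))) \<le> sqrt (pi / A) ^ m / 4"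
    proof -
      have "sqrt (pi / (A - l2)) ^ m * exp (m * (A * l2 * s\<^sup>2 / (A - l2) - l2 * (s * (1 - \<eta>))))
          \<le> H * exp (m * (l2 * (A * s / (A - l2) - s * (1 - \<eta>))))"
        unfolding H_def by (rule tail_bound[OF A0 l2A As])
      also have "l2 * (A * s / (A - l2) - s * (1 - \<eta>)) = - \<kappa>2" by (simp add: \<kappa>2_def algebra_simps)
      also have "H * exp (m * (- \<kappa>2)) \<le> H * (1/4)" using exp_small[OF \<kappa>2 mk2] H0 by (intro mult_left_mono) auto
      finally show ?thesis by (simp add: H_def)
    qed
    have GC: "real (card S) * (exp (- \<eta> * m / 2) * sqrt (pi / A) ^ m / 2) \<le> Mn * sqrt (pi / (A * s)) ^ m"
      using gauss_count[OF s0 s1 \<eta>0 l10 _ l20 _ _ fin sph cnt] l1A T1 T2 by (simp add: A_def)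
    have "sqrt (pi / (A * s)) = sqrt (pi / A) * sqrt (1 / s)" by (simp add: real_sqrt_mult[symmetric])
    then have Gs: "sqrt (pi / (A * s)) ^ m = H * sqrt (1 / s) ^ m" by (simp add: H_def power_mult_distrib)
    have "real (card S) * exp (- \<eta> * m / 2) / 2 * H \<le> Mn * sqrt (1 / s) ^ m * H"
      using GC unfolding Gs by (simp add: H_def mult_ac)
    then have "real (card S) * exp (- \<eta> * m / 2) / 2 \<le> Mn * sqrt (1 / s) ^ m"
      using H0 by simp
    then have cS: "real (card S) \<le> M0 * (exp (\<eta> * m / 2) * sqrt (1 / s) ^ m)"
      by (simp add: M0_def exp_minus field_simps)
    have sqe: "sqrt (1 / s) ^ m = exp (m * (ln (1 / s) / 2))"
      using s0 by (simp add: exp_of_nat_mult[symmetric] powr_half_sqrt[symmetric] powr_def)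
    have lns: "ln (1 / s) = 2 * ln (1 + \<eta>) + ln (1 / ts)"
      using ts0 \<eta>0 by (simp add: s_def ln_div ln_mult power2_eq_square)
    have lne: "ln (1 + \<eta>) \<le> \<eta>" using \<eta>0 by (intro ln_add_one_self_le_self) simp
    have "\<eta> / 2 + ln (1 / s) / 2 \<le> 1/2 * ln (1 / ts) + e" using lns lne \<eta>e e by linarith
    then have "m * (\<eta> / 2 + ln (1 / s) / 2) \<le> m * (1/2 * ln (1 / ts) + e)" by (intro mult_left_mono) auto
    then have "\<eta> * m / 2 + m * (ln (1 / s) / 2) \<le> m * (1/2 * ln ((real L - 1) / (L * \<theta>)) + e)"
      unfolding tsinv by (simp add: algebra_simps)
    then have "exp (\<eta> * m / 2) * sqrt (1 / s) ^ m \<le> exp (m * (1/2 * ln ((real L - 1) / (L * \<theta>)) + e))"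
      unfolding sqe by (simp add: exp_add[symmetric])
    then show ?thesis using cS by (smt (verit) M0_def mult_left_mono of_nat_0_le_iff)
  qed
  then show ?thesis by blast
qed



lemma lift_code:
  fixes n :: nat and P N :: real and K :: nat and C
  assumes n: "n \<ge> 1" and P: "P > 0" and N: "N > 0"
    and ld: "list_decodable n P N K C"
  shows "\<exists>S. finite S \<and> card S = card C \<and> (\<forall>c\<in>S. ip (Suc n) c c = real (Suc n)) \<and>
     (\<forall>z. card {c\<in>S. d2 (Suc n) c z \<le> (N / P) * real (Suc n)} \<le> K)"
proof -
  define m where "m = Suc n"
  define \<kappa> where "\<kappa> = sqrt (m / (n * P))"
  have nP: "real n * P > 0" using n P by simp
  have \<kappa>0: "\<kappa> > 0" using nP by (simp add: \<kappa>_def m_def)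
  have \<kappa>2: "\<kappa>^2 = m / (n * P)" using nP by (simp add: \<kappa>_def m_def)
  have finC: "finite C" and Cb: "C \<subseteq> ballN n (\<lambda>_. 0) (sqrt (real n * P))"
    and lst: "\<forall>y \<in> Rn n. card (C \<inter> ballN n y (sqrt (real n * N))) \<le> K"
    using ld by (auto simp: list_decodable_def)
  define f where "f c = (\<lambda>i. if i < n then \<kappa> * c i else if i = n then \<kappa> * sqrt (n * P - (\<Sum>j<n. (c j)^2)) else 0)" for c :: "nat \<Rightarrow> real"
  have inRn: "c \<in> Rn n" if "c \<in> C" for c using that Cb by (auto simp: ballN_def)
  have nrm: "(\<Sum>j<n. (c j)^2) \<le> n * P" if "c \<in> C" for c
  proof -
    have "distn n c (\<lambda>_. 0) \<le> sqrt (real n * P)" using that Cb by (auto simp: ballN_def)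
    then have "sqrt (\<Sum>j<n. (c j)^2) \<le> sqrt (real n * P)" by (simp add: distn_def)
    then show ?thesis by simp
  qed
  have sph: "ip m (f c) (f c) = real m" if c: "c \<in> C" for c
  proof -
    have "ip m (f c) (f c) = (\<Sum>i<n. (f c i)^2) + (f c n)^2"
      by (simp add: ip_def m_def power2_eq_square)
    also have "(\<Sum>i<n. (f c i)^2) = \<kappa>^2 * (\<Sum>i<n. (c i)^2)"
      by (simp add: f_def sum_distrib_left power_mult_distrib)
    also have "(f c n)^2 = \<kappa>^2 * (n * P - (\<Sum>j<n. (c j)^2))"
      using nrm[OF c] by (simp add: f_def power_mult_distrib)
    also have "\<kappa>^2 * (\<Sum>i<n. (c i)^2) + \<kappa>^2 * (n * P - (\<Sum>j<n. (c j)^2)) = \<kappa>^2 * (n * P)"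
      by (simp add: algebra_simps)
    also have "\<dots> = m" using n P by (simp add: \<kappa>2)
    finally show ?thesis .
  qed
  have inj: "inj_on f C"
  proof (rule inj_onI)
    fix c d assume c: "c \<in> C" and d: "d \<in> C" and eq: "f c = f d"
    show "c = d"
    proof
      fix i
      show "c i = d i"
      proof (cases "i < n")
        case True
        then have "\<kappa> * c i = \<kappa> * d i" using fun_cong[OF eq, of i] by (simp add: f_def)
        then show ?thesis using \<kappa>0 by simp
      next
        case False
        then show ?thesis using inRn[OF c] inRn[OF d] by (simp add: Rn_def)
      qed
    qed
  qed
  define S where "S = f ` C"
  have "\<forall>z. card {c\<in>S. d2 m c z \<le> (N / P) * real m} \<le> K"
  proof
    fix z
    define z' where "z' = (\<lambda>i. if i < n then z i / \<kappa> else 0)"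
    have z'R: "z' \<in> Rn n" by (simp add: z'_def Rn_def)
    have sub: "{c\<in>S. d2 m c z \<le> (N / P) * real m} \<subseteq> f ` (C \<inter> ballN n z' (sqrt (real n * N)))"
    proof
      fix x assume "x \<in> {c\<in>S. d2 m c z \<le> (N / P) * real m}"
      then obtain c where c: "c \<in> C" and x: "x = f c" and dd: "d2 m (f c) z \<le> (N / P) * real m"
        by (auto simp: S_def)
      have "(\<Sum>i<n. (f c i - z i)^2) \<le> d2 m (f c) z"
        by (simp add: d2_def m_def)
      also have "(\<Sum>i<n. (f c i - z i)^2) = \<kappa>^2 * (\<Sum>i<n. (c i - z' i)^2)"
        unfolding sum_distrib_left
      proof (intro sum.cong refl)
        fix i assume "i \<in> {..<n}"
        then have "f c i - z i = \<kappa> * (c i - z' i)" using \<kappa>0 by (simp add: f_def z'_def field_simps)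
        then show "(f c i - z i)^2 = \<kappa>^2 * (c i - z' i)^2" by (simp add: power_mult_distrib)
      qed
      finally have "\<kappa>^2 * (\<Sum>i<n. (c i - z' i)^2) \<le> (N / P) * real m" using dd by simp
      then have "(\<Sum>i<n. (c i - z' i)^2) \<le> (N / P) * real m / \<kappa>^2"
        using \<kappa>0 by (subst pos_le_divide_eq) (auto simp: mult.commute)
      also have "(N / P) * real m / \<kappa>^2 = real n * N"
      proof -
        have "real n * N * \<kappa>^2 = (N / P) * real m" using n P by (simp add: \<kappa>2 field_simps)
        then show ?thesis using \<kappa>0 by (subst (asm) eq_commute) (simp only:, simp)
      qed
      finally have "sqrt (\<Sum>i<n. (c i - z' i)^2) \<le> sqrt (real n * N)" by simp
      then have "c \<in> ballN n z' (sqrt (real n * N))" using inRn[OF c] by (simp add: ballN_def distn_def)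
      then show "x \<in> f ` (C \<inter> ballN n z' (sqrt (real n * N)))" using c x by auto
    qed
    have "card {c\<in>S. d2 m c z \<le> (N / P) * real m} \<le> card (f ` (C \<inter> ballN n z' (sqrt (real n * N))))"
      using finC by (intro card_mono[OF _ sub]) auto
    also have "\<dots> \<le> card (C \<inter> ballN n z' (sqrt (real n * N)))" by (rule card_image_le) (use finC in auto)
    also have "\<dots> \<le> K" using lst z'R by auto
    finally show "card {c\<in>S. d2 m c z \<le> (N / P) * real m} \<le> K" .
  qed
  moreover have "finite S" using finC by (simp add: S_def)
  moreover have "card S = card C" using inj by (simp add: S_def card_image)
  moreover have "\<forall>c\<in>S. ip m c c = real m" using sph by (auto simp: S_def)
  ultimately show ?thesis unfolding m_def by blast
qed


theorem mainTheorem16: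
  fixes L :: nat and P N :: real
  assumes "L \<ge> 2" and "N > 0" and "P > 0"
    and "N / P \<le> (real L - 1) / real L"
  shows "capacity (L - 1) P N \<le> ereal (1/2 * ln ((real L - 1) * P / (real L * N)))"
proof -
  note L2 = assms(1) and N0 = assms(2) and P0 = assms(3) and NP = assms(4)
  define \<theta> where "\<theta> = N / P"
  have \<theta>0: "\<theta> > 0" using N0 P0 by (simp add: \<theta>_def)
  define B where "B = 1/2 * ln ((real L - 1) * P / (real L * N))"
  have Beq: "1/2 * ln ((real L - 1) / (L * \<theta>)) = B"
    using N0 P0 by (simp add: B_def \<theta>_def field_simps)
  have B0: "B \<ge> 0"
  proof -
    have L0: "real L > 0" using L2 by simp
    have "N * L \<le> (real L - 1) * P" using NP P0 L0 by (simp add: field_simps)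
    then have "(real L - 1) * P / (real L * N) \<ge> 1" using N0 L0 by (simp add: field_simps)
    then show ?thesis by (simp add: B_def)
  qed
  have bound: "capacity (L - 1) P N \<le> ereal (B + 2 * e)" if e: "e > 0" for e
  proof -
    obtain M0 m0 where core: "\<forall>m \<ge> m0. \<forall>S. finite S \<longrightarrow> (\<forall>c\<in>S. ip m c c = real m) \<longrightarrow>
       (\<forall>z. card {c\<in>S. d2 m c z \<le> \<theta> * m} \<le> L - 1) \<longrightarrow>
       real (card S) \<le> M0 * exp (m * (1/2 * ln ((real L - 1) / (L * \<theta>)) + e))"
      using core[OF L2 \<theta>0 _ e] NP unfolding \<theta>_def by blast
    define n1 :: nat where "n1 = nat \<lceil>(\<bar>ln M0\<bar> + B + e) / e\<rceil>"
    define N1 where "N1 = max 1 (max m0 n1)"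
    have ev: "(SUP C \<in> {C. list_decodable n P N (L - 1) C}. ereal (rate n C)) \<le> ereal (B + 2 * e)"
      if n: "n \<ge> N1" for n
    proof (rule SUP_least)
      fix C assume "C \<in> {C. list_decodable n P N (L - 1) C}"
      then have ld: "list_decodable n P N (L - 1) C" by simp
      have n1: "n \<ge> 1" and nm0: "Suc n \<ge> m0" and nn1': "n \<ge> n1"
        using n unfolding N1_def by auto
      have nn1: "real n \<ge> (\<bar>ln M0\<bar> + B + e) / e"
      proof -
        have "(\<bar>ln M0\<bar> + B + e) / e \<le> real n1" unfolding n1_def by (rule real_nat_ceiling_ge)
        also have "\<dots> \<le> real n" using nn1' by simp
        finally show ?thesis .
      qed
      obtain S where S: "finite S" "card S = card C" "\<forall>c\<in>S. ip (Suc n) c c = real (Suc n)"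
        "\<forall>z. card {c\<in>S. d2 (Suc n) c z \<le> (N / P) * real (Suc n)} \<le> L - 1"
        using lift_code[OF n1 P0 N0 ld] by blast
      have "real (card S) \<le> M0 * exp (Suc n * (1/2 * ln ((real L - 1) / (L * \<theta>)) + e))"
        using core nm0 S(1) S(3) S(4) unfolding \<theta>_def by blast
      then have cC: "real (card C) \<le> M0 * exp (Suc n * (B + e))"
        using S(2) unfolding Beq by simp
      show "ereal (rate n C) \<le> ereal (B + 2 * e)"
      proof (cases "card C = 0")
        case True
        then show ?thesis using B0 e by (simp add: rate_def)
      next
        case False
        then have c1: "real (card C) \<ge> 1" by simp
        have M0p: "M0 > 0"
        proof (rule ccontr)
          assume "\<not> M0 > 0"
          then have "M0 * exp (Suc n * (B + e)) \<le> 0" by (simp add: mult_nonpos_nonneg)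
          then show False using cC c1 by simp
        qed
        have "ln (real (card C)) \<le> ln (M0 * exp (Suc n * (B + e)))"
          using cC c1 by (subst ln_le_cancel_iff) auto
        also have "\<dots> = ln M0 + Suc n * (B + e)" using M0p by (simp add: ln_mult)
        finally have lnC: "ln (real (card C)) \<le> ln M0 + (n + 1) * (B + e)" by simp
        have "ln M0 + (n + 1) * (B + e) \<le> n * (B + 2 * e)"
        proof -
          have "\<bar>ln M0\<bar> + B + e \<le> n * e" using nn1 e by (simp add: field_simps)
          then show ?thesis by (simp add: algebra_simps)
        qed
        then have "ln (real (card C)) \<le> n * (B + 2 * e)" using lnC by linarith
        then have "rate n C \<le> B + 2 * e" using n1 by (simp add: rate_def divide_le_eq mult.commute)
        then show ?thesis by simp
      qed
    qed
    have "capacity (L - 1) P N = limsup (\<lambda>n. SUP C \<in> {C. list_decodable n P N (L - 1) C}. ereal (rate n C))"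
      by (simp add: capacity_def)
    also have "\<dots> \<le> ereal (B + 2 * e)"
      by (intro Limsup_bounded eventually_sequentiallyI[of N1]) (rule ev)
    finally show ?thesis .
  qed
  have "capacity (L - 1) P N \<le> ereal B"
  proof (rule ereal_le_epsilon2)
    fix e :: real assume e: "0 < e"
    have "capacity (L - 1) P N \<le> ereal (B + 2 * (e / 2))" using bound[of "e/2"] e by simp
    then show "capacity (L - 1) P N \<le> ereal B + ereal e" by simp
  qed
  then show ?thesis by (simp add: B_def)
qed


end
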